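(* Let $p$ be a prime and $k,\ell,m$ integers with $k>0$ and $\ell,m\ge 0$; put $q=p^k$, $Q=p^{\ell}$, $R=p^m$. Let $c\in\mathbb{F}_{q^3}$ and define \[ f(X)=(X^q-X)^{Q+1}+c^{q^2}X^{q^2R}+c^{q}X^{qR}+cX^{R}, \] i.e. $f(X)=X^{Q+1}\circ(X^q-X)+(X^{q^2}+X^q+X)\circ cX^{R}$. Then $f(X)$ permutes $\mathbb{F}_{q^3}$ if and only if $\gcd(q-1,Q+1)=1$ and $\operatorname{Tr}_{\mathbb{F}_{q^3}/\mathbb{F}_q}(c)\ne 0$. Equivalently, $f(X)$ permutes $\mathbb{F}_{q^3}$ if and only if $p=2$, $\operatorname{ord}_2(k)\le\operatorname{ord}_2(\ell)$, and $c^{q^2}+c^q+c\ne 0$.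
   Context: A polynomial permutes $\mathbb{F}_{q^3}$ if the induced map $\mathbb{F}_{q^3}\to\mathbb{F}_{q^3}$ is a bijection. $\operatorname{Tr}_{\mathbb{F}_{q^3}/\mathbb{F}_q}(c)=c^{q^2}+c^q+c$. For a nonzero integer $N$, $\operatorname{ord}_2(N)$ is the largest integer $s\ge0$ with $2^s\mid N$, and $\operatorname{ord}_2(0)=\infty$. *)

theory Defs
  imports "HOL-Computational_Algebra.Computational_Algebra" "HOL-Library.Extended_Nat"
begin

definition tr3 :: "nat \<Rightarrow> 'a::field \<Rightarrow> 'a" where
  "tr3 q c = c ^ (q ^ 2) + c ^ q + c"

definition ord2 :: "nat \<Rightarrow> enat" where
  "ord2 n = (if n = 0 then \<infinity> else enat (multiplicity (2::nat) n))"

end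

theory Submission
  imports Defs "HOL-Number_Theory.Cong"
begin

datatype 'a w3 = Pt (re: 'a) (im: 'a)

instantiation w3 :: (comm_ring_1) comm_ring_1
begin
definition "0 = Pt 0 0"
definition "1 = Pt 1 0"
definition "x + y = Pt (re x + re y) (im x + im y)"
definition "x - y = Pt (re x - re y) (im x - im y)"
definition "- x = Pt (- re x) (- im x)"
definition "x * y = Pt (re x * re y - im x * im y) (re x * im y + im x * re y - im x * im y)"
instance
  by standard (auto simp: zero_w3_def one_w3_def plus_w3_def minus_w3_def uminus_w3_def times_w3_def
      w3.expand algebra_simps)
end

lemma w3_eq: "(x::'a::comm_ring_1 w3) = y \<longleftrightarrow> re x = re y \<and> im x = im y"
  using w3.expand by blast

lemma frob2:
  fixes x y :: "'b::comm_ring_1"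
  assumes "(2::'b) = 0"
  shows "(x + y) ^ (2 ^ n) = x ^ (2 ^ n) + y ^ (2 ^ n)"
proof (induction n)
  case 0 then show ?case by simp
next
  case (Suc n)
  have "(x + y) ^ (2 ^ Suc n) = ((x + y) ^ (2 ^ n))^2" by (simp add: power_mult[symmetric] mult.commute)
  also have "\<dots> = (x ^ (2 ^ n))^2 + (y ^ (2 ^ n))^2 + 2 * x ^ (2 ^ n) * y ^ (2 ^ n)"
    by (simp add: Suc power2_eq_square algebra_simps)
  also have "\<dots> = x ^ (2 ^ Suc n) + y ^ (2 ^ Suc n)"
    using assms by (simp add: power_mult[symmetric] mult.commute)
  finally show ?case .
qed

definition iota :: "'a::comm_ring_1 \<Rightarrow> 'a w3" where "iota a = Pt a 0"
definition om :: "'a::comm_ring_1 w3" where "om = Pt 0 1"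

lemma iota_add: "iota (a + b) = iota a + iota b" by (simp add: iota_def plus_w3_def)
lemma iota_mult: "iota (a * b) = iota a * iota b" by (simp add: iota_def times_w3_def)
lemma iota_one: "iota 1 = 1" by (simp add: iota_def one_w3_def)
lemma iota_zero: "iota 0 = 0" by (simp add: iota_def zero_w3_def)
lemma iota_pow: "iota (a ^ n) = iota a ^ n"
  by (induction n) (simp_all add: iota_one iota_mult)
lemma iota_inj: "iota a = iota b \<longleftrightarrow> a = b" by (simp add: iota_def)
lemma Pt_decomp: "Pt a b = iota a + om * iota b"
  by (simp add: iota_def om_def times_w3_def plus_w3_def)
lemma om_om: "om * om = (Pt (-1) (-1) :: 'a::comm_ring_1 w3)"
  by (simp add: om_def times_w3_def)
lemma om3: "om ^ 3 = (1::'a::comm_ring_1 w3)"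
proof -
  have "om ^ 3 = om * (om * (om::'a w3))" by (simp add: numeral_3_eq_3)
  also have "\<dots> = 1" by (simp add: om_om om_def times_w3_def one_w3_def)
  finally show ?thesis .
qed
lemma two_w3: assumes "(2::'a::comm_ring_1) = 0" shows "(2::'a w3) = 0"
proof -
  have "(2::'a w3) = 1 + 1" by (rule one_add_one[symmetric])
  also have "\<dots> = Pt (1 + 1) 0" by (simp add: one_w3_def plus_w3_def)
  also have "\<dots> = 0" using assms by (simp add: zero_w3_def)
  finally show ?thesis .
qed
lemma om_sq: assumes "(2::'a::comm_ring_1) = 0" shows "om ^ 2 = (1::'a w3) + om"
proof -
  have m: "-(1::'a) = 1" using assms by (metis add_eq_0_iff2 one_add_one)
  have "om ^ 2 = (om * om :: 'a w3)" by (simp add: power2_eq_square)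
  also have "\<dots> = Pt 1 1" by (simp add: om_om m)
  also have "\<dots> = 1 + om" by (simp add: om_def one_w3_def plus_w3_def)
  finally show ?thesis .
qed
lemma om_pow_mod: "om ^ n = (om::'a::comm_ring_1 w3) ^ (n mod 3)"
proof -
  have "(om::'a w3) ^ n = om ^ (3 * (n div 3) + n mod 3)" by simp
  also have "\<dots> = om ^ (3 * (n div 3)) * om ^ (n mod 3)" by (rule power_add)
  also have "(om::'a w3) ^ (3 * (n div 3)) = 1" by (simp add: power_mult om3)
  finally show ?thesis by simp
qed

lemma pow_gcd_cong_int:
  fixes x d :: int
  assumes "[x ^ m = 1] (mod d)" "[x ^ n = 1] (mod d)"
  shows "[x ^ (gcd m n) = 1] (mod d)"
proof (cases "m = 0")
  case True then show ?thesis using assms by simp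
next
  case False
  then obtain u v where uv: "m * u = n * v + gcd m n" using bezout_nat by blast
  have "[x ^ (m * u) = 1] (mod d)"
    using cong_pow[OF assms(1), of u] by (simp add: power_mult)
  moreover have "[x ^ (n * v + gcd m n) = x ^ (gcd m n)] (mod d)"
    using cong_mult[OF cong_pow[OF assms(2), of v] cong_refl[of "x ^ gcd m n"]]
    by (simp add: power_mult power_add)
  ultimately show ?thesis using uv
    by (metis cong_sym cong_trans)
qed

lemma N2_int:
  fixes a b :: nat
  assumes "a > 0" "gcd a (2 * b) dvd b"
  shows "coprime ((2::int) ^ b + 1) (2 ^ a - 1)"
proof (rule coprimeI)
  fix d :: int
  assume d1: "d dvd 2 ^ b + 1" and d2: "d dvd 2 ^ a - 1"
  have c1: "[(2::int) ^ a = 1] (mod d)" using d2 by (simp add: cong_iff_dvd_diff)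
  have "d dvd (2 ^ b + 1) * (2 ^ b - 1)" using d1 by simp
  then have "d dvd (2::int) ^ (2 * b) - 1" by (simp add: power_mult algebra_simps power2_eq_square)
  then have c2: "[(2::int) ^ (2 * b) = 1] (mod d)" by (simp add: cong_iff_dvd_diff)
  have c3: "[(2::int) ^ gcd a (2 * b) = 1] (mod d)" using pow_gcd_cong_int[OF c1 c2] .
  obtain r where r: "b = gcd a (2 * b) * r" using assms(2) by blast
  have e2: "(2::int) ^ b = (2 ^ gcd a (2 * b)) ^ r" using r by (metis power_mult)
  have "[(2::int) ^ b = 1] (mod d)"
    using cong_pow[OF c3, of r] unfolding e2 by simp
  moreover have "[(2::int) ^ b = - 1] (mod d)" using d1 by (simp add: cong_iff_dvd_diff)
  ultimately have "[1 = (-1::int)] (mod d)" by (metis cong_sym cong_trans)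
  then have d3: "d dvd 2" by (simp add: cong_iff_dvd_diff)
  have e: "(2::int) ^ a - 1 = 2 * 2 ^ (a - 1) - 1"
    using assms(1) by (metis power_Suc Suc_diff_1)
  have "d dvd 2 * 2 ^ (a - 1)" using d3 by simp
  with d2 e have "d dvd 2 * 2 ^ (a - 1) - (2 * 2 ^ (a - 1) - 1)" by (metis dvd_diff)
  then show "is_unit d" by simp
qed

lemma N2:
  fixes a b :: nat
  assumes "a > 0" "gcd a (2 * b) dvd b"
  shows "coprime (2 ^ b + 1 :: nat) (2 ^ a - 1)"
proof -
  have "int (2 ^ a - 1) = 2 ^ a - 1" by (simp add: of_nat_diff)
  moreover have "int (2 ^ b + 1) = 2 ^ b + 1" by simp
  ultimately show ?thesis using N2_int[OF assms]
    by (metis coprime_int_iff)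
qed

lemma G2:
  fixes g b :: nat
  assumes "g > 0" "\<forall>j. 2 ^ j dvd g \<longrightarrow> 2 ^ j dvd b" "g dvd 2 * b"
  shows "g dvd b"
  using assms
proof (induction g arbitrary: b rule: less_induct)
  case (less g)
  show ?case
  proof (cases "even g")
    case False
    then have "coprime g 2" by (simp add: coprime_commute)
    then show ?thesis using less.prems(3) by (simp add: coprime_dvd_mult_right_iff)
  next
    case True
    then obtain h where h: "g = 2 * h" by blast
    have "2 ^ 1 dvd g" using True by simp
    then have "2 ^ 1 dvd b" using less.prems(2) by blast
    then obtain c where c: "b = 2 * c" by auto
    have hpos: "h > 0" "h < g" using h less.prems(1) by auto
    have "\<forall>j. 2 ^ j dvd h \<longrightarrow> 2 ^ j dvd c"
    proof (intro allI impI)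
      fix j assume "2 ^ j dvd h"
      then have "2 ^ Suc j dvd g" using h by simp
      then have "2 ^ Suc j dvd b" using less.prems(2) by blast
      then show "2 ^ j dvd c" using c by simp
    qed
    moreover have "h dvd 2 * c" using less.prems(3) h c by simp
    ultimately have "h dvd c" using less.IH[OF hpos(2) hpos(1)] by blast
    then show ?thesis using h c by simp
  qed
qed

lemma ord2_iff:
  assumes "k > 0"
  shows "ord2 k \<le> ord2 l \<longleftrightarrow> (\<forall>j. 2 ^ j dvd k \<longrightarrow> 2 ^ j dvd l)"
proof (cases "l = 0")
  case True then show ?thesis by (simp add: ord2_def)
next
  case False
  have "ord2 k \<le> ord2 l \<longleftrightarrow> multiplicity 2 k \<le> multiplicity 2 l"
    using assms False by (simp add: ord2_def)
  also have "\<dots> \<longleftrightarrow> (\<forall>j. 2 ^ j dvd k \<longrightarrow> 2 ^ j dvd l)"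
  proof
    assume "multiplicity 2 k \<le> multiplicity 2 l"
    moreover have "2 ^ j dvd k \<Longrightarrow> j \<le> multiplicity 2 k" for j
      using assms by (intro multiplicity_geI) auto
    ultimately show "\<forall>j. 2 ^ j dvd k \<longrightarrow> 2 ^ j dvd l"
      using multiplicity_dvd' order.trans by blast
  next
    assume "\<forall>j. 2 ^ j dvd k \<longrightarrow> 2 ^ j dvd l"
    then have "2 ^ multiplicity 2 k dvd l" using multiplicity_dvd by blast
    then show "multiplicity 2 k \<le> multiplicity 2 l"
      using False by (intro multiplicity_geI) auto
  qed
  finally show ?thesis .
qed

lemma N1:
  fixes p k l :: nat
  assumes p: "prime p" and k: "k > 0" and g: "gcd (p ^ k - 1) (p ^ l + 1) = 1"
  shows "p = 2 \<and> (\<forall>j. 2 ^ j dvd k \<longrightarrow> 2 ^ j dvd l)"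
proof -
  have p2: "p = 2"
  proof (rule ccontr)
    assume "p \<noteq> 2"
    then have "odd p" using p prime_odd_nat prime_ge_2_nat by (metis le_neq_implies_less)
    then have o: "odd (p ^ k)" "odd (p ^ l)" by simp_all
    then have e: "even (p ^ k - 1)" "even (p ^ l + 1)" using odd_pos by auto
    have "2 dvd gcd (p ^ k - 1) (p ^ l + 1)" by (rule gcd_greatest[OF e])
    then show False unfolding g by simp
  qed
  moreover have "\<forall>j. 2 ^ j dvd k \<longrightarrow> 2 ^ j dvd l"
  proof (rule ccontr)
    assume "\<not> (\<forall>j. 2 ^ j dvd k \<longrightarrow> 2 ^ j dvd l)"
    then obtain j where j: "2 ^ j dvd k" "\<not> 2 ^ j dvd (l::nat)" by blast
    then have l0: "l \<noteq> 0" by (metis dvd_0_right)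
    define t where "t = multiplicity 2 l"
    have t1: "2 ^ t dvd l" unfolding t_def by (rule multiplicity_dvd)
    have t2: "\<not> 2 ^ Suc t dvd l"
    proof
      assume "2 ^ Suc t dvd l"
      then have "Suc t \<le> multiplicity 2 l" using l0 by (intro multiplicity_geI) auto
      then show False unfolding t_def by simp
    qed
    have "t < j"
    proof (rule ccontr)
      assume "\<not> t < j"
      then have "(2::nat) ^ j dvd 2 ^ t" by (simp add: le_imp_power_dvd)
      then show False using t1 j(2) dvd_trans by blast
    qed
    then have "(2::nat) ^ Suc t dvd 2 ^ j" by (intro le_imp_power_dvd) simp
    then have "2 ^ Suc t dvd k" using j(1) dvd_trans by blast
    then obtain r where r: "k = 2 * 2 ^ t * r" by auto
    obtain l' where l': "l = 2 ^ t * l'" using t1 by blast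
    have ol': "odd l'"
    proof
      assume "even l'"
      then have "2 ^ Suc t dvd l" using l' by auto
      then show False using t2 by simp
    qed
    define h where "h = (2::nat) ^ t"
    define m where "m = (2::int) ^ h + 1"
    have c0: "[(2::int) ^ h = -1] (mod m)" unfolding m_def by (simp add: cong_iff_dvd_diff)
    have e1: "(2::int) ^ k = ((2 ^ h) ^ 2) ^ r"
    proof -
      have "k = (h * 2) * r" unfolding r h_def by simp
      then show ?thesis by (simp only: power_mult)
    qed
    have "[(((2::int) ^ h) ^ 2) ^ r = ((-1) ^ 2) ^ r] (mod m)" by (intro cong_pow c0)
    then have c1: "[(2::int) ^ k = 1] (mod m)" unfolding e1 by simp
    have e2: "(2::int) ^ l = (2 ^ h) ^ l'" unfolding l' h_def by (simp only: power_mult)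
    have "[((2::int) ^ h) ^ l' = (-1) ^ l'] (mod m)" by (intro cong_pow c0)
    then have c2: "[(2::int) ^ l = -1] (mod m)" unfolding e2 using ol' by simp
    have d1: "m dvd 2 ^ k - 1" using c1 by (simp add: cong_iff_dvd_diff)
    have d2: "m dvd 2 ^ l + 1" using c2 by (simp add: cong_iff_dvd_diff)
    have "coprime (2 ^ k - 1 :: nat) (2 ^ l + 1)" using g p2 by (simp add: coprime_iff_gcd_eq_1)
    then have "coprime (int (2 ^ k - 1)) (int (2 ^ l + 1))" by (simp only: coprime_int_iff)
    moreover have "int (2 ^ k - 1) = 2 ^ k - 1" by (simp add: of_nat_diff)
    moreover have "int (2 ^ l + 1) = 2 ^ l + 1" by simp
    ultimately have "coprime ((2::int) ^ k - 1) (2 ^ l + 1)" by (simp add: add.commute)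
    then have "is_unit m" using d1 d2 coprime_common_divisor by blast
    moreover have "m \<ge> 3"
    proof -
      have "(2::int) ^ h \<ge> 2 ^ 1" unfolding h_def by (intro power_increasing) auto
      then show ?thesis unfolding m_def by simp
    qed
    ultimately show False by simp
  qed
  ultimately show ?thesis by blast
qed

lemma char2_neg: assumes "(2::'b::comm_ring_1) = 0" shows "- (x::'b) = x"
proof -
  have "x + x = 2 * x" by (rule mult_2[symmetric])
  also have "\<dots> = 0" using assms by simp
  finally have "x + x = 0" .
  then show ?thesis by (simp add: add_eq_0_iff2)
qed

lemma char2_sum0: assumes "(2::'b::comm_ring_1) = 0" shows "(x::'b) + y = 0 \<longleftrightarrow> x = y"
  using char2_neg[OF assms, of y] by (metis add_eq_0_iff2)

lemma w_cancel:
  fixes w x y :: "'b::comm_ring_1"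
  assumes w3: "w ^ 3 = 1" and "w * x = w * y" shows "x = y"
proof -
  have "w * w * (w * x) = w * w * (w * y)" using assms(2) by simp
  then have "w ^ 3 * x = w ^ 3 * y" by (simp add: power3_eq_cube mult.assoc)
  then show ?thesis using w3 by simp
qed

lemma eig_alg1:
  fixes w X1 X2 :: "'b::comm_ring_1"
  assumes two: "(2::'b) = 0" and w3: "w ^ 3 = 1" and w2: "w * w = 1 + w"
    and E1: "w * X1 + w * w * X2 = X1 + X2"
  shows "X2 = w * X1"
proof -
  have "w * X1 + w * w * X2 + (X1 + X2) = 0" using E1 char2_sum0[OF two] by blast
  then have "(w + 1) * X1 + (w * w + 1) * X2 = 0" by (simp add: algebra_simps)
  moreover have "w * w + 1 = w"
  proof -
    have "w * w + 1 = w + (1 + 1)" using w2 by (simp add: algebra_simps)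
    also have "\<dots> = w" by (simp only: one_add_one two add_0_right)
    finally show ?thesis .
  qed
  ultimately have "w * w * X1 + w * X2 = 0" using w2 by (simp add: add.commute)
  then have "w * w * X1 = w * X2" using char2_sum0[OF two] by blast
  then have "w * (w * X1) = w * X2" by (simp add: mult.assoc)
  then show ?thesis using w_cancel[OF w3] by metis
qed

lemma eig_alg2:
  fixes w X1 :: "'b::comm_ring_1"
  assumes two: "(2::'b) = 0" and w3: "w ^ 3 = 1" and w2: "w * w = 1 + w"
    and E: "X1 = w * X1"
  shows "X1 = 0"
proof -
  have "X1 + w * X1 = 0" using E char2_sum0[OF two] by blast
  then have "(1 + w) * X1 = 0" by (simp add: algebra_simps)
  then have "w * (w * X1) = w * 0" using w2 by (simp add: mult.assoc[symmetric])
  then have "w * X1 = 0" using w_cancel[OF w3] by metis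
  then have "w * X1 = w * 0" by simp
  then show ?thesis using w_cancel[OF w3] by metis
qed

lemma eig:
  fixes X1 X2 C :: "'a::comm_ring_1 w3"
  assumes two: "(2::'a) = 0" and m: "m = 2 ^ s" and om_m: "om ^ m = (om::'a w3)"
    and h1: "X1 ^ m = om * X1" and h2: "X2 ^ m = om ^ 2 * X2" and hC: "C ^ m = C"
    and hS: "(X1 + X2 + C) ^ m = X1 + X2 + C"
  shows "X1 = 0 \<and> X2 = 0"
proof -
  have two': "(2::'a w3) = 0" using two by (rule two_w3)
  have w2: "om * om = (1::'a w3) + om" using om_sq[OF two] by (simp add: power2_eq_square)
  have o3: "om ^ 3 = (1::'a w3)" by (rule om3)
  have "(X1 + X2 + C) ^ m = X1 ^ m + X2 ^ m + C ^ m" unfolding m using frob2[OF two'] by simp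
  then have E1: "om * X1 + om * om * X2 = X1 + X2" using hS h1 h2 hC by (simp add: power2_eq_square)
  have a: "X2 = om * X1" by (rule eig_alg1[OF two' o3 w2 E1])
  have b: "om * (om * X2) = om * (om * X1)"
  proof -
    have "X2 ^ m = om ^ m * X1 ^ m" using a by (simp add: power_mult_distrib)
    also have "\<dots> = om * (om * X1)" unfolding om_m h1 by simp
    finally show ?thesis using h2 by (simp add: power2_eq_square mult.assoc)
  qed
  have c: "X2 = X1" using w_cancel[OF o3 w_cancel[OF o3 b]] .
  have "X1 = om * X1" using a c by metis
  then have "X1 = 0" by (rule eig_alg2[OF two' o3 w2])
  then show ?thesis using c by simp
qed

lemma bez_pow:
  fixes a b c :: "'b::comm_ring_1"
  assumes ha: "a ^ Suc n = c * a" and hb: "b ^ Suc n = c * b" and c3: "c ^ 3 = 1"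
    and he: "a ^ e = b ^ e" and cop: "coprime e n" and e0: "e > 0"
  shows "a = b"
proof -
  have it: "x ^ (j * n + 1) = c ^ j * x" if hx: "x ^ Suc n = c * x" for x :: 'b and j
  proof (induction j)
    case 0 then show ?case by simp
  next
    case (Suc j)
    have ex: "Suc j * n + 1 = j * n + Suc n" by simp
    have "x ^ (Suc j * n + 1) = x ^ (j * n) * x ^ Suc n" unfolding ex by (rule power_add)
    also have "\<dots> = c * (x ^ (j * n) * x)" unfolding hx by (simp only: mult_ac)
    also have "x ^ (j * n) * x = x ^ (j * n + 1)" by (simp only: power_add power_one_right)
    finally show ?case unfolding Suc.IH by (simp only: power_Suc mult_ac)
  qed
  obtain u v where uv: "e * u = n * v + gcd e n" using bezout_nat[of e n] e0 by auto
  then have uv': "e * u = v * n + 1" using cop by (simp add: mult.commute)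
  have "a ^ (e * u) = b ^ (e * u)" by (simp only: power_mult he)
  then have "c ^ v * a = c ^ v * b" unfolding uv' it[OF ha, of v] it[OF hb, of v] .
  moreover have "(c ^ v) ^ 3 = 1" using c3 by (metis power_mult mult.commute power_one)
  ultimately show ?thesis using w_cancel by metis
qed

lemma pow2_mod3: "(2::nat) ^ k mod 3 = (if even k then 1 else 2)"
proof (induction k)
  case 0 then show ?case by simp
next
  case (Suc k)
  have "(2::nat) ^ Suc k mod 3 = (2 * (2 ^ k mod 3)) mod 3" by (metis mod_mult_right_eq power_Suc)
  then show ?case using Suc by auto
qed

lemma om_pow_eq: "n mod 3 = r \<Longrightarrow> (om::'a::comm_ring_1 w3) ^ n = om ^ r"
  using om_pow_mod by metis

lemma odd_two_pow_dvd: assumes "odd (k::nat)" "2 ^ j dvd 2 * k" shows "2 ^ j dvd (2::nat)"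
proof (cases j)
  case 0 then show ?thesis by simp
next
  case (Suc i)
  then have "2 ^ i dvd k" using assms(2) by simp
  have "i = 0"
  proof (rule ccontr)
    assume "i \<noteq> 0"
    then have "2 dvd (2::nat) ^ i" by simp
    then have "2 dvd k" using \<open>2 ^ i dvd k\<close> dvd_trans by blast
    then show False using assms(1) by simp
  qed
  then show ?thesis using Suc by simp
qed

lemma c2_rules:
  assumes "(2::'b::comm_ring_1) = 0"
  shows "(x::'b) + x = 0" "x + (x + y) = y" "- x = x" "x - y = x + y"
proof -
  show n: "- x = x" by (rule char2_neg[OF assms])
  show "x + x = 0" using char2_sum0[OF assms] by blast
  then show "x + (x + y) = y" by (simp add: add.assoc[symmetric])
  show "x - y = x + y" using char2_neg[OF assms, of y] by simp
qed

lemma Pt_add: "Pt a b + Pt c d = Pt (a + c) (b + (d::'a::comm_ring_1))"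
  by (simp add: plus_w3_def)

lemma om_mult: assumes two: "(2::'a::comm_ring_1) = 0" shows "om * Pt c d = Pt d (c + (d::'a))"
  using c2_rules[OF two] by (simp add: om_def times_w3_def)

lemma om2_mult: assumes two: "(2::'a::comm_ring_1) = 0" shows "om ^ 2 * Pt c d = Pt (c + d) (c::'a)"
proof -
  have "om ^ 2 * Pt c d = om * (om * Pt c d)" by (simp add: power2_eq_square mult.assoc)
  also have "\<dots> = Pt (c + d) (d + (c + d))" by (simp add: om_mult[OF two])
  also have "d + (c + d) = c" using c2_rules[OF two] by (simp add: add_ac)
  finally show ?thesis .
qed

lemma frob_Pt:
  assumes two: "(2::'a::comm_ring_1) = 0" and om_m: "om ^ (2 ^ n) = (om::'a w3)"
  shows "Pt (a::'a) b ^ (2 ^ n) = Pt (a ^ (2 ^ n)) (b ^ (2 ^ n))"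
proof -
  have two': "(2::'a w3) = 0" using two by (rule two_w3)
  have "Pt a b ^ (2 ^ n) = (iota a + om * iota b) ^ (2 ^ n)" by (simp add: Pt_decomp)
  also have "\<dots> = (iota a) ^ (2 ^ n) + (om * iota b) ^ (2 ^ n)" by (rule frob2[OF two'])
  also have "\<dots> = iota (a ^ (2 ^ n)) + om * iota (b ^ (2 ^ n))"
    by (simp add: power_mult_distrib iota_pow om_m)
  also have "\<dots> = Pt (a ^ (2 ^ n)) (b ^ (2 ^ n))" by (simp add: Pt_decomp)
  finally show ?thesis .
qed

lemma frob_Pt2:
  assumes two: "(2::'a::comm_ring_1) = 0" and om_m: "om ^ (2 ^ n) = (om::'a w3) ^ 2"
  shows "Pt (a::'a) b ^ (2 ^ n) = Pt (a ^ (2 ^ n) + b ^ (2 ^ n)) (b ^ (2 ^ n))"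
proof -
  have two': "(2::'a w3) = 0" using two by (rule two_w3)
  have "Pt a b ^ (2 ^ n) = (iota a + om * iota b) ^ (2 ^ n)" by (simp add: Pt_decomp)
  also have "\<dots> = (iota a) ^ (2 ^ n) + (om * iota b) ^ (2 ^ n)" by (rule frob2[OF two'])
  also have "\<dots> = iota (a ^ (2 ^ n)) + om ^ 2 * iota (b ^ (2 ^ n))"
    by (simp add: power_mult_distrib iota_pow om_m)
  also have "\<dots> = Pt (a ^ (2 ^ n) + b ^ (2 ^ n)) (b ^ (2 ^ n))"
    by (simp add: iota_def om2_mult[OF two] Pt_add)
  finally show ?thesis .
qed

lemma pw_swap: "((x::'b::monoid_mult) ^ i) ^ m = (x ^ m) ^ i"
  by (metis power_mult mult.commute)

lemma eig_terms:
  fixes a1 a2 b1 b2 ca cb :: "'a::comm_ring_1 w3"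
  assumes two: "(2::'a) = 0"
    and ha1: "a1 ^ (2 ^ s) = ca * a1" and ha2: "a2 ^ (2 ^ s) = ca * a2"
    and hb1: "b1 ^ (2 ^ s) = cb * b1" and hb2: "b2 ^ (2 ^ s) = cb * b2"
  shows "(a1 ^ (Q + 1) + a2 ^ (Q + 1)) ^ (2 ^ s) = ca ^ (Q + 1) * (a1 ^ (Q + 1) + a2 ^ (Q + 1))"
    and "(b1 ^ (Q + 1) + b2 ^ (Q + 1)) ^ (2 ^ s) = cb ^ (Q + 1) * (b1 ^ (Q + 1) + b2 ^ (Q + 1))"
    and "(a1 ^ Q * b1 + a2 ^ Q * b2) ^ (2 ^ s) = (ca ^ Q * cb) * (a1 ^ Q * b1 + a2 ^ Q * b2)"
    and "(a1 * b1 ^ Q + a2 * b2 ^ Q) ^ (2 ^ s) = (ca * cb ^ Q) * (a1 * b1 ^ Q + a2 * b2 ^ Q)"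
proof -
  have two': "(2::'a w3) = 0" using two by (rule two_w3)
  note fr = frob2[OF two']
  show "(a1 ^ (Q + 1) + a2 ^ (Q + 1)) ^ (2 ^ s) = ca ^ (Q + 1) * (a1 ^ (Q + 1) + a2 ^ (Q + 1))"
    unfolding fr pw_swap[of _ "Q + 1"] ha1 ha2 by (simp add: power_mult_distrib algebra_simps)
  show "(b1 ^ (Q + 1) + b2 ^ (Q + 1)) ^ (2 ^ s) = cb ^ (Q + 1) * (b1 ^ (Q + 1) + b2 ^ (Q + 1))"
    unfolding fr pw_swap[of _ "Q + 1"] hb1 hb2 by (simp add: power_mult_distrib algebra_simps)
  show "(a1 ^ Q * b1 + a2 ^ Q * b2) ^ (2 ^ s) = (ca ^ Q * cb) * (a1 ^ Q * b1 + a2 ^ Q * b2)"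
    unfolding fr power_mult_distrib pw_swap[of _ Q] ha1 ha2 hb1 hb2
    by (simp add: power_mult_distrib algebra_simps)
  show "(a1 * b1 ^ Q + a2 * b2 ^ Q) ^ (2 ^ s) = (ca * cb ^ Q) * (a1 * b1 ^ Q + a2 * b2 ^ Q)"
    unfolding fr power_mult_distrib pw_swap[of _ Q] ha1 ha2 hb1 hb2
    by (simp add: power_mult_distrib algebra_simps)
qed

lemma expand_Q:
  fixes a b :: "'a::comm_ring_1 w3"
  assumes two: "(2::'a) = 0"
  shows "(a + b) ^ (2 ^ l + 1) = a ^ (2 ^ l + 1) + b ^ (2 ^ l + 1) + a ^ (2 ^ l) * b + a * b ^ (2 ^ l)"
proof -
  have two': "(2::'a w3) = 0" using two by (rule two_w3)
  have "(a + b) ^ (2 ^ l + 1) = (a + b) ^ (2 ^ l) * (a + b)" by (simp add: power_add)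
  also have "\<dots> = (a ^ (2 ^ l) + b ^ (2 ^ l)) * (a + b)" by (simp add: frob2[OF two'])
  also have "\<dots> = a ^ (2 ^ l) * a + b ^ (2 ^ l) * b + a ^ (2 ^ l) * b + a * b ^ (2 ^ l)"
    by (simp add: algebra_simps)
  also have "a ^ (2 ^ l) * a = a ^ (2 ^ l + 1)" by (simp add: power_add)
  also have "b ^ (2 ^ l) * b = b ^ (2 ^ l + 1)" by (simp add: power_add)
  finally show ?thesis .
qed

lemma pow22: "(x::'b::monoid_mult) ^ (2 ^ (2 * k)) = (x ^ (2 ^ k)) ^ (2 ^ k)"
proof -
  have "(2::nat) ^ (2 * k) = 2 ^ k * 2 ^ k" by (simp add: mult_2 power_add)
  then show ?thesis by (simp add: power_mult)
qed

lemma om_m1: "(a::nat) mod 3 = 1 \<Longrightarrow> om ^ a = (om::'a::comm_ring_1 w3)"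
  using om_pow_eq[of a 1] by simp
lemma om_m2: "(a::nat) mod 3 = 2 \<Longrightarrow> om ^ a = (om::'a::comm_ring_1 w3) ^ 2"
  using om_pow_eq[of a 2] by simp
lemma om_m0: "(a::nat) mod 3 = 0 \<Longrightarrow> om ^ a = (1::'a::comm_ring_1 w3)"
  using om_pow_eq[of a 0] by simp
lemma om2_cube: "(om ^ 2) ^ 3 = (1::'a::comm_ring_1 w3)"
  by (metis om3 power_one pw_swap)

lemma cancel3: "(2::'b::comm_ring_1) = 0 \<Longrightarrow> (a::'b) + b + a = b"
  by (metis add.commute c2_rules(2))
lemma cancel4: "(2::'b::comm_ring_1) = 0 \<Longrightarrow> (a::'b) + b + b = a"
  by (metis add.assoc c2_rules(1) add_0_right)

lemma core:
  fixes y1 y2 :: "'a::field" and k l :: nat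
  assumes two: "(2::'a) = 0" and k: "k > 0" and D: "\<forall>j. 2 ^ j dvd k \<longrightarrow> 2 ^ j dvd l"
    and H1: "(y1 ^ (2 ^ k)) ^ (2 ^ k) = y1 ^ (2 ^ k) + y1"
    and H2: "(y2 ^ (2 ^ k)) ^ (2 ^ k) = y2 ^ (2 ^ k) + y2"
    and S: "(y1 ^ (2 ^ l + 1) + y2 ^ (2 ^ l + 1)) ^ (2 ^ k) = y1 ^ (2 ^ l + 1) + y2 ^ (2 ^ l + 1)"
  shows "y1 = y2"
proof -
  define q :: nat where "q = 2 ^ k"
  define Q :: nat where "Q = 2 ^ l"
  have two': "(2::'a w3) = 0" using two by (rule two_w3)
  note c2 = c2_rules[OF two]
  have fr: "(x + y) ^ q = x ^ q + y ^ q" for x y :: 'a unfolding q_def by (rule frob2[OF two])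
  define al where "al y = Pt (y ^ q) y" for y :: 'a
  define be where "be y = Pt (y ^ q + y) y" for y :: 'a
  have sumab: "al y + be y = iota y" for y
    unfolding al_def be_def iota_def Pt_add by (simp only: c2(1) c2(2))
  define a1 where "a1 = al y1"
  define a2 where "a2 = al y2"
  define b1 where "b1 = be y1"
  define b2 where "b2 = be y2"
  define AA where "AA = a1 ^ (Q + 1) + a2 ^ (Q + 1)"
  define BB where "BB = b1 ^ (Q + 1) + b2 ^ (Q + 1)"
  define C1 where "C1 = a1 ^ Q * b1 + a2 ^ Q * b2"
  define C2 where "C2 = a1 * b1 ^ Q + a2 * b2 ^ Q"
  define SS where "SS = y1 ^ (Q + 1) + y2 ^ (Q + 1)"
  have iS: "iota SS = AA + BB + C1 + C2"
  proof -
    have "iota SS = (a1 + b1) ^ (Q + 1) + (a2 + b2) ^ (Q + 1)"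
      unfolding SS_def a1_def a2_def b1_def b2_def sumab by (simp add: iota_add iota_pow iota_mult)
    also have "\<dots> = AA + BB + C1 + C2"
      unfolding AA_def BB_def C1_def C2_def Q_def expand_Q[OF two] by (simp add: add_ac)
    finally show ?thesis .
  qed
  have SSq: "SS ^ q = SS" using S unfolding SS_def q_def Q_def .
  have Qm: "Q mod 3 = (if even l then 1 else 2)" unfolding Q_def by (rule pow2_mod3)
  have q1: "q \<ge> 1" unfolding q_def by simp
  have P1: "(y ^ q + y) ^ q = y" if Hy: "(y ^ q) ^ q = y ^ q + y" for y :: 'a
    unfolding fr Hy by (rule cancel3[OF two])
  have y3: "((y ^ q) ^ q) ^ q = y" if Hy: "(y ^ q) ^ q = y ^ q + y" for y :: 'a
    unfolding Hy by (rule P1[OF Hy])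
  have P3: "(y ^ q) ^ q + y ^ q = y" if Hy: "(y ^ q) ^ q = y ^ q + y" for y :: 'a
    unfolding Hy by (rule cancel3[OF two])
  have H1': "(y1 ^ q) ^ q = y1 ^ q + y1" using H1 unfolding q_def .
  have H2': "(y2 ^ q) ^ q = y2 ^ q + y2" using H2 unfolding q_def .
  have fin: "y1 = y2" if "a1 = a2"
    using that unfolding a1_def a2_def al_def by simp
  show ?thesis
  proof (cases "even k")
    case True
    have lev: "even l" using D True by (metis dvd_power_iff_le power_one_right)
    have om_q: "om ^ q = (om::'a w3)"
      unfolding q_def by (rule om_m1) (use pow2_mod3[of k] True in simp)
    have hal: "al y ^ q = om ^ 2 * al y" if Hy: "(y ^ q) ^ q = y ^ q + y" for y :: 'a
      unfolding al_def q_def frob_Pt[OF two om_q[unfolded q_def]] om2_mult[OF two]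
      using Hy unfolding q_def by simp
    have hbe: "be y ^ q = om * be y" if Hy: "(y ^ q) ^ q = y ^ q + y" for y :: 'a
    proof -
      have "be y ^ q = Pt ((y ^ q + y) ^ q) (y ^ q)"
        unfolding be_def q_def frob_Pt[OF two om_q[unfolded q_def]] ..
      also have "\<dots> = Pt y (y ^ q)" unfolding P1[OF Hy] ..
      also have "\<dots> = om * be y" unfolding be_def om_mult[OF two] cancel4[OF two] ..
      finally show ?thesis .
    qed
    have ea: "a1 ^ (2 ^ k) = om ^ 2 * a1" "a2 ^ (2 ^ k) = om ^ 2 * a2"
      using hal[OF H1'] hal[OF H2'] unfolding a1_def a2_def q_def by auto
    have eb: "b1 ^ (2 ^ k) = om * b1" "b2 ^ (2 ^ k) = om * b2"
      using hbe[OF H1'] hbe[OF H2'] unfolding b1_def b2_def q_def by auto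
    note ET = eig_terms[OF two ea eb, of Q]
    have Q1: "Q mod 3 = 1" using Qm lev by simp
    have c1: "(om ^ 2) ^ (Q + 1) = (om::'a w3)"
      unfolding power_mult[symmetric] by (rule om_m1) (use Q1 in presburger)
    have c2': "om ^ (Q + 1) = (om::'a w3) ^ 2"
      by (rule om_m2) (use Q1 in presburger)
    have c3: "(om ^ 2) ^ Q * om = (1::'a w3)"
      unfolding power_mult[symmetric] power_Suc2[symmetric] by (rule om_m0) (use Q1 in presburger)
    have c4: "om ^ 2 * om ^ Q = (1::'a w3)"
      unfolding power_add[symmetric] by (rule om_m0) (use Q1 in presburger)
    have hA: "AA ^ (2 ^ k) = om * AA" using ET(1) c1 unfolding AA_def by simp
    have hB: "BB ^ (2 ^ k) = om ^ 2 * BB" using ET(2) c2' unfolding BB_def by simp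
    have hC: "(C1 + C2) ^ (2 ^ k) = C1 + C2"
      using ET(3) ET(4) c3 c4 unfolding C1_def C2_def frob2[OF two'] by simp
    have hS: "(AA + BB + (C1 + C2)) ^ (2 ^ k) = AA + BB + (C1 + C2)"
    proof -
      have "AA + BB + (C1 + C2) = iota SS" using iS by (simp add: add.assoc)
      moreover have "iota SS ^ (2 ^ k) = iota SS" using SSq unfolding q_def by (simp add: iota_pow[symmetric])
      ultimately show ?thesis by simp
    qed
    have "AA = 0" using eig[OF two refl om_q[unfolded q_def] hA hB hC hS] by blast
    then have eqA: "a1 ^ (Q + 1) = a2 ^ (Q + 1)" unfolding AA_def using char2_sum0[OF two'] by blast
    have sq: "Suc (q - 1) = q" using q1 by simp
    have g: "gcd k (2 * l) dvd l"
    proof (rule G2)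
      show "gcd k (2 * l) > 0" using k by simp
      show "\<forall>j. 2 ^ j dvd gcd k (2 * l) \<longrightarrow> 2 ^ j dvd l" using D dvd_trans gcd_dvd1 by blast
      show "gcd k (2 * l) dvd 2 * l" by simp
    qed
    have cop: "coprime (Q + 1) (q - 1)" unfolding Q_def q_def using N2[OF k g] .
    have "a1 = a2"
    proof (rule bez_pow[OF _ _ _ eqA cop])
      show "a1 ^ Suc (q - 1) = om ^ 2 * a1" unfolding sq using ea(1) q_def by simp
      show "a2 ^ Suc (q - 1) = om ^ 2 * a2" unfolding sq using ea(2) q_def by simp
      show "(om ^ 2) ^ 3 = (1::'a w3)" by (rule om2_cube)
      show "Q + 1 > 0" by simp
    qed
    then show ?thesis by (rule fin)
  next
    case False
    have om_q: "om ^ q = (om::'a w3) ^ 2"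
      unfolding q_def by (rule om_m2) (use pow2_mod3[of k] False in simp)
    have om_qq: "om ^ (2 ^ (2 * k)) = (om::'a w3)"
      by (rule om_m1) (use pow2_mod3[of "2 * k"] in simp)
    have hal: "al y ^ (2 ^ (2 * k)) = om * al y" if Hy: "(y ^ q) ^ q = y ^ q + y" for y :: 'a
    proof -
      have "al y ^ (2 ^ (2 * k)) = Pt ((y ^ q) ^ (2 ^ (2 * k))) (y ^ (2 ^ (2 * k)))"
        unfolding al_def by (rule frob_Pt[OF two om_qq])
      also have "\<dots> = Pt (((y ^ q) ^ q) ^ q) ((y ^ q) ^ q)" unfolding pow22 q_def ..
      also have "\<dots> = Pt y (y ^ q + y)" using y3[OF Hy] Hy by simp
      also have "\<dots> = om * al y" unfolding al_def om_mult[OF two] ..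
      finally show ?thesis .
    qed
    have hbe: "be y ^ (2 ^ (2 * k)) = om ^ 2 * be y" if Hy: "(y ^ q) ^ q = y ^ q + y" for y :: 'a
    proof -
      have "be y ^ (2 ^ (2 * k)) = Pt ((y ^ q + y) ^ (2 ^ (2 * k))) (y ^ (2 ^ (2 * k)))"
        unfolding be_def by (rule frob_Pt[OF two om_qq])
      also have "\<dots> = Pt (((y ^ q + y) ^ q) ^ q) ((y ^ q) ^ q)" unfolding pow22 q_def ..
      also have "(y ^ q + y) ^ q = y" by (rule P1[OF Hy])
      also have "Pt (y ^ q) ((y ^ q) ^ q) = om ^ 2 * be y"
        unfolding be_def om2_mult[OF two] cancel4[OF two] Hy ..
      finally show ?thesis .
    qed
    have ea: "a1 ^ (2 ^ (2 * k)) = om * a1" "a2 ^ (2 ^ (2 * k)) = om * a2"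
      using hal[OF H1'] hal[OF H2'] unfolding a1_def a2_def by auto
    have eb: "b1 ^ (2 ^ (2 * k)) = om ^ 2 * b1" "b2 ^ (2 ^ (2 * k)) = om ^ 2 * b2"
      using hbe[OF H1'] hbe[OF H2'] unfolding b1_def b2_def by auto
    note ET = eig_terms[OF two ea eb, of Q]
    have hS0: "iota SS ^ (2 ^ (2 * k)) = iota SS"
      using SSq unfolding pow22 q_def by (simp add: iota_pow[symmetric])
    have q2: "Suc (2 ^ (2 * k) - 1) = 2 ^ (2 * k)" by simp
    have oddk: "odd k" using False by simp
    show ?thesis
    proof (cases "even l")
      case True
      have Q1: "Q mod 3 = 1" using Qm True by simp
      have c1: "om ^ (Q + 1) = (om::'a w3) ^ 2"
        by (rule om_m2) (use Q1 in presburger)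
      have c2': "(om ^ 2) ^ (Q + 1) = (om::'a w3)"
        unfolding power_mult[symmetric] by (rule om_m1) (use Q1 in presburger)
      have c3: "om ^ Q * om ^ 2 = (1::'a w3)"
        unfolding power_add[symmetric] by (rule om_m0) (use Q1 in presburger)
      have c4: "om * (om ^ 2) ^ Q = (1::'a w3)"
        unfolding power_mult[symmetric] power_Suc[symmetric] by (rule om_m0) (use Q1 in presburger)
      have hA: "AA ^ (2 ^ (2 * k)) = om ^ 2 * AA" using ET(1) c1 unfolding AA_def by simp
      have hB: "BB ^ (2 ^ (2 * k)) = om * BB" using ET(2) c2' unfolding BB_def by simp
      have hC: "(C1 + C2) ^ (2 ^ (2 * k)) = C1 + C2"
        using ET(3) ET(4) c3 c4 unfolding C1_def C2_def frob2[OF two'] by simp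
      have hS: "(BB + AA + (C1 + C2)) ^ (2 ^ (2 * k)) = BB + AA + (C1 + C2)"
      proof -
        have "BB + AA + (C1 + C2) = iota SS" using iS by (simp add: add_ac)
        then show ?thesis using hS0 by simp
      qed
      have "AA = 0" using eig[OF two refl om_qq hB hA hC hS] by blast
      then have eqA: "a1 ^ (Q + 1) = a2 ^ (Q + 1)" unfolding AA_def using char2_sum0[OF two'] by blast
      have g: "gcd (2 * k) (2 * l) dvd l"
      proof (rule G2)
        show "gcd (2 * k) (2 * l) > 0" using k by simp
        show "\<forall>j. 2 ^ j dvd gcd (2 * k) (2 * l) \<longrightarrow> 2 ^ j dvd l"
          using odd_two_pow_dvd[OF oddk] True dvd_trans gcd_dvd1 by blast
        show "gcd (2 * k) (2 * l) dvd 2 * l" by simp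
      qed
      have cop: "coprime (Q + 1) (2 ^ (2 * k) - 1)" unfolding Q_def using N2[of "2 * k" l] k g by simp
      have "a1 = a2"
      proof (rule bez_pow[OF _ _ _ eqA cop])
        show "a1 ^ Suc (2 ^ (2 * k) - 1) = om * a1" unfolding q2 using ea(1) .
        show "a2 ^ Suc (2 ^ (2 * k) - 1) = om * a2" unfolding q2 using ea(2) .
        show "om ^ 3 = (1::'a w3)" by (rule om3)
        show "Q + 1 > 0" by simp
      qed
      then show ?thesis by (rule fin)
    next
      case lodd: False
      have Q2: "Q mod 3 = 2" using Qm lodd by simp
      have c1: "om ^ (Q + 1) = (1::'a w3)"
        by (rule om_m0) (use Q2 in presburger)
      have c2': "(om ^ 2) ^ (Q + 1) = (1::'a w3)"
        unfolding power_mult[symmetric] by (rule om_m0) (use Q2 in presburger)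
      have c3: "om ^ Q * om ^ 2 = (om::'a w3)"
        unfolding power_add[symmetric] by (rule om_m1) (use Q2 in presburger)
      have c4: "om * (om ^ 2) ^ Q = (om::'a w3) ^ 2"
        unfolding power_mult[symmetric] power_Suc[symmetric] by (rule om_m2) (use Q2 in presburger)
      have hA: "(AA + BB) ^ (2 ^ (2 * k)) = AA + BB"
        using ET(1) ET(2) c1 c2' unfolding AA_def BB_def frob2[OF two'] by simp
      have h1: "C1 ^ (2 ^ (2 * k)) = om * C1" using ET(3) c3 unfolding C1_def by simp
      have h2: "C2 ^ (2 ^ (2 * k)) = om ^ 2 * C2" using ET(4) c4 unfolding C2_def by simp
      have hS: "(C1 + C2 + (AA + BB)) ^ (2 ^ (2 * k)) = C1 + C2 + (AA + BB)"
      proof -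
        have "C1 + C2 + (AA + BB) = iota SS" using iS by (simp add: add_ac)
        then show ?thesis using hS0 by simp
      qed
      have "C2 = 0" using eig[OF two refl om_qq h1 h2 hA hS] by blast
      then have eqC: "a1 * b1 ^ Q = a2 * b2 ^ Q" unfolding C2_def using char2_sum0[OF two'] by blast
      have rel: "be y = om ^ 2 * al y ^ q" if Hy: "(y ^ q) ^ q = y ^ q + y" for y :: 'a
      proof -
        have "al y ^ q = Pt ((y ^ q) ^ q + y ^ q) (y ^ q)"
          unfolding al_def q_def frob_Pt2[OF two om_q[unfolded q_def]] ..
        also have "\<dots> = Pt y (y ^ q)" unfolding P3[OF Hy] ..
        finally have e: "al y ^ q = Pt y (y ^ q)" .
        have "om ^ 2 * al y ^ q = Pt (y + y ^ q) y" unfolding e om2_mult[OF two] ..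
        then show ?thesis unfolding be_def by (simp add: add.commute)
      qed
      have ab: "a * (om ^ 2 * a ^ q) ^ Q = (om ^ 2) ^ Q * a ^ (q * Q + 1)" for a :: "'a w3"
        by (simp add: power_mult_distrib power_mult[symmetric] power_Suc2 mult_ac)
      have "(om ^ 2) ^ Q * a1 ^ (q * Q + 1) = (om ^ 2) ^ Q * a2 ^ (q * Q + 1)"
        using eqC unfolding b1_def b2_def rel[OF H1'] rel[OF H2'] a1_def[symmetric] a2_def[symmetric] ab .
      moreover have "((om ^ 2) ^ Q) ^ 3 = (1::'a w3)" by (metis om2_cube power_one pw_swap)
      ultimately have eqA: "a1 ^ (q * Q + 1) = a2 ^ (q * Q + 1)" using w_cancel by metis
      have g: "gcd (2 * k) (2 * (k + l)) dvd (k + l)"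
      proof (rule G2)
        show "gcd (2 * k) (2 * (k + l)) > 0" using k by simp
        have "even (k + l)" using oddk lodd by simp
        then show "\<forall>j. 2 ^ j dvd gcd (2 * k) (2 * (k + l)) \<longrightarrow> 2 ^ j dvd (k + l)"
          using odd_two_pow_dvd[OF oddk] dvd_trans gcd_dvd1 by blast
        show "gcd (2 * k) (2 * (k + l)) dvd 2 * (k + l)" by simp
      qed
      have qQ: "q * Q = 2 ^ (k + l)" unfolding q_def Q_def by (simp add: power_add)
      have cop: "coprime (q * Q + 1) (2 ^ (2 * k) - 1)" unfolding qQ using N2[of "2 * k" "k + l"] k g by simp
      have "a1 = a2"
      proof (rule bez_pow[OF _ _ _ eqA cop])
        show "a1 ^ Suc (2 ^ (2 * k) - 1) = om * a1" unfolding q2 using ea(1) .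
        show "a2 ^ Suc (2 ^ (2 * k) - 1) = om * a2" unfolding q2 using ea(2) .
        show "om ^ 3 = (1::'a w3)" by (rule om3)
        show "q * Q + 1 > 0" by simp
      qed
      then show ?thesis by (rule fin)
    qed
  qed
qed

lemma card_char_zero: "of_nat (card (UNIV :: 'a::{finite,field} set)) = (0::'a)"
proof -
  have inj: "inj (\<lambda>x::'a. x + 1)" by (simp add: inj_def)
  have im: "(\<lambda>x::'a. x + 1) ` UNIV = UNIV"
    by (metis (no_types, lifting) diff_add_cancel surj_def)
  have "(\<Sum>x\<in>UNIV. x) = (\<Sum>x\<in>(\<lambda>x::'a. x + 1) ` UNIV. x)" by (simp only: im)
  also have "\<dots> = sum ((\<lambda>x. x) \<circ> (\<lambda>x::'a. x + 1)) UNIV" by (rule sum.reindex[OF inj])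
  also have "\<dots> = (\<Sum>x\<in>UNIV. x + 1)" by (simp add: comp_def)
  also have "\<dots> = (\<Sum>x\<in>UNIV. x) + of_nat (card (UNIV :: 'a set))" by (simp add: sum.distrib)
  finally show ?thesis by simp
qed

lemma CHAR_eq:
  assumes p: "prime p" and c: "card (UNIV :: 'a::{finite,field} set) = p ^ n"
  shows "CHAR('a) = p"
proof -
  have "of_nat (p ^ n) = (0::'a)" using card_char_zero[where 'a='a] c by simp
  then have "(of_nat p :: 'a) ^ n = 0" by simp
  then have "of_nat p = (0::'a)" by simp
  then have "CHAR('a) dvd p" by (simp add: of_nat_eq_0_iff_char_dvd)
  moreover have "CHAR('a) \<noteq> 1" by (metis CHAR_not_1 One_nat_def)
  ultimately show ?thesis using p by (metis prime_nat_iff)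
qed

lemma fermat_field:
  fixes x :: "'a::{finite,field}"
  shows "x ^ card (UNIV :: 'a set) = x"
proof (cases "x = 0")
  case False
  have "x * (\<Prod>y\<in>UNIV-{0}. x * y) = x * x ^ (card (UNIV :: 'a set) - 1) * \<Prod>(UNIV-{0})"
    by (simp add: prod.distrib mult_ac)
  also have "x * x ^ (card (UNIV :: 'a set) - 1) = x ^ Suc (card (UNIV :: 'a set) - 1)"
    by (subst power_Suc) auto
  also have "Suc (card (UNIV :: 'a set) - 1) = card (UNIV :: 'a set)"
    using finite_UNIV_card_ge_0[where ?'a = 'a] by simp
  also have "(\<Prod>y\<in>UNIV-{0}. x * y) = (\<Prod>y\<in>UNIV-{0}. y)"
    by (rule prod.reindex_bij_witness[of _ "\<lambda>y. y / x" "\<lambda>y. x * y"]) (use False in auto)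
  finally show ?thesis
    by simp
qed (use finite_UNIV_card_ge_0[where ?'a = 'a] in auto)

lemma fermat_unit:
  fixes x :: "'a::{finite,field}"
  assumes "x \<noteq> 0"
  shows "x ^ (card (UNIV :: 'a set) - 1) = 1"
proof -
  have cpos: "card (UNIV :: 'a set) > 0" by (simp add: finite_UNIV_card_ge_0)
  have "x * x ^ (card (UNIV :: 'a set) - 1) = x * 1"
    using fermat_field[of x] cpos by (metis power_Suc Suc_diff_1 mult_1_right)
  then show ?thesis using assms by simp
qed


lemma card_pow_eq_le:
  fixes c :: "'a::field"
  assumes "m < n"
  shows "card {x::'a. x ^ n = c * x ^ m} \<le> n"
proof -
  define P where "P = monom (1::'a) n - monom c m"
  have P0: "P \<noteq> 0"
  proof
    assume "P = 0"
    then have "coeff P n = 0" by simp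
    then show False using assms unfolding P_def by simp
  qed
  have "degree P \<le> n" unfolding P_def
    by (intro degree_diff_le) (use assms degree_monom_le order.trans less_imp_le in blast)+
  moreover have "{x::'a. x ^ n = c * x ^ m} = {x. poly P x = 0}"
    unfolding P_def by (auto simp: poly_monom)
  moreover have "card {x. poly P x = 0} \<le> degree P" by (rule card_poly_roots_bound[OF P0])
  ultimately show ?thesis by simp
qed

lemma exists_root_unity:
  fixes d :: nat
  assumes d1: "d > 1" and dd: "d dvd card (UNIV :: 'a::{finite,field} set) - 1"
  shows "\<exists>z::'a. z \<noteq> 1 \<and> z ^ d = 1"
proof (rule ccontr)
  assume H: "\<not> (\<exists>z::'a. z \<noteq> 1 \<and> z ^ d = 1)"
  define N where "N = card (UNIV :: 'a set) - 1"
  have c2: "card (UNIV :: 'a set) \<ge> 2"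
  proof -
    have "card {0::'a, 1} = 2" by simp
    moreover have "card {0::'a, 1} \<le> card (UNIV :: 'a set)" by (rule card_mono) auto
    ultimately show ?thesis by simp
  qed
  obtain e where e: "N = d * e" using dd unfolding N_def by blast
  have Npos: "N \<ge> 1" unfolding N_def using c2 by simp
  then have epos: "e \<ge> 1" using e by (cases e) auto
  define U where "U = (UNIV :: 'a set) - {0}"
  have cU: "card U = N" unfolding U_def N_def by (simp add: card_Diff_singleton)
  have inj: "inj_on (\<lambda>z::'a. z ^ d) U"
  proof (rule inj_onI)
    fix z1 z2 assume "z1 \<in> U" "z2 \<in> U" and eq: "z1 ^ d = z2 ^ d"
    then have z2: "z2 \<noteq> 0" unfolding U_def by auto
    have "(z1 / z2) ^ d = 1" using eq z2 by (simp add: power_divide)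
    then have "z1 / z2 = 1" using H by blast
    then show "z1 = z2" using z2 by simp
  qed
  have sub: "(\<lambda>z::'a. z ^ d) ` U \<subseteq> {w. w ^ e = 1 * w ^ 0}"
  proof
    fix w assume "w \<in> (\<lambda>z::'a. z ^ d) ` U"
    then obtain z where z: "z \<in> U" "w = z ^ d" by blast
    have "w ^ e = z ^ N" using z e by (simp add: power_mult)
    also have "\<dots> = 1" using z fermat_unit[of z] unfolding U_def N_def by simp
    finally show "w \<in> {w. w ^ e = 1 * w ^ 0}" by simp
  qed
  have "N = card ((\<lambda>z::'a. z ^ d) ` U)" using card_image[OF inj] cU by simp
  also have "\<dots> \<le> card {w::'a. w ^ e = 1 * w ^ 0}" by (rule card_mono[OF _ sub]) simp
  also have "\<dots> \<le> e" by (rule card_pow_eq_le) (use epos in simp)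
  finally have "N \<le> e" .
  moreover have "N \<ge> 2 * e" using e d1 by simp
  ultimately show False using epos by simp
qed

lemma char2_swap:
  assumes two: "(2::'b::comm_ring_1) = 0" and eq: "(a::'b) + b = c + d"
  shows "a + c = b + d"
proof -
  have "a + c = (a + b) + (b + c)" by (simp only: add.assoc c2_rules(2)[OF two])
  also have "\<dots> = (c + d) + (b + c)" by (simp only: eq)
  also have "\<dots> = b + d + (c + c)" by (simp only: add_ac)
  also have "\<dots> = b + d" by (simp only: c2_rules(1)[OF two] add_0_right)
  finally show ?thesis .
qed

theorem theorem1p4:
  fixes p k l m :: nat and c :: "'a::{finite, field}"
  assumes "prime p" and "k > 0" and "card (UNIV :: 'a set) = (p ^ k) ^ 3"
  defines "q \<equiv> p ^ k" and "Q \<equiv> p ^ l" and "R \<equiv> p ^ m"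
  defines "f \<equiv> (\<lambda>x::'a. (x ^ q - x) ^ (Q + 1) + c ^ (q ^ 2) * x ^ (q ^ 2 * R)
                       + c ^ q * x ^ (q * R) + c * x ^ R)"
  shows "(bij f \<longleftrightarrow> gcd (q - 1) (Q + 1) = 1 \<and> tr3 q c \<noteq> 0)
       \<and> (bij f \<longleftrightarrow> p = 2 \<and> ord2 k \<le> ord2 l \<and> tr3 q c \<noteq> 0)"
proof -
  note pp = assms(1) and kpos = assms(2) and card = assms(3)
  have p2: "p \<ge> 2" using pp by (rule prime_ge_2_nat)
  have q2: "q \<ge> 2"
  proof -
    have "p ^ 1 \<le> p ^ k" by (rule power_increasing) (use kpos p2 in auto)
    then show ?thesis unfolding q_def using p2 by simp
  qed
  have ppos: "p > 0" using p2 by simp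
  have cardq: "card (UNIV :: 'a set) = q ^ 3" using card unfolding q_def .
  have CH: "CHAR('a) = p" using CHAR_eq[OF pp, of "k * 3"] card by (simp add: power_mult)
  have pr: "prime CHAR('a)" using CH pp by simp
  have frp: "(x + y) ^ (p ^ n) = x ^ (p ^ n) + y ^ (p ^ n)" for x y :: 'a and n
    by (rule freshmans_dream'[OF pr]) (simp add: CH)
  have frm: "(x - y) ^ (p ^ n) = x ^ (p ^ n) - y ^ (p ^ n)" for x y :: 'a and n
  proof -
    have "x ^ (p ^ n) = ((x - y) + y) ^ (p ^ n)" by simp
    also have "\<dots> = (x - y) ^ (p ^ n) + y ^ (p ^ n)" by (rule frp)
    finally show ?thesis by (simp add: algebra_simps)
  qed
  have frq: "(x + y) ^ q = x ^ q + y ^ q" for x y :: 'a unfolding q_def by (rule frp)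
  have frqm: "(x - y) ^ q = x ^ q - y ^ q" for x y :: 'a unfolding q_def by (rule frm)
  have frR: "(x + y) ^ R = x ^ R + y ^ R" for x y :: 'a unfolding R_def by (rule frp)
  have frRm: "(x - y) ^ R = x ^ R - y ^ R" for x y :: 'a unfolding R_def by (rule frm)
  have fq3: "((x ^ q) ^ q) ^ q = x" for x :: 'a
    using fermat_field[of x] unfolding cardq by (simp add: power_mult[symmetric] power3_eq_cube mult.assoc)
  have e1: "x ^ (q ^ 2 * R) = ((x ^ q) ^ q) ^ R" for x :: 'a
    by (simp add: power_mult[symmetric] power2_eq_square)
  have e2: "x ^ (q * R) = (x ^ q) ^ R" for x :: 'a by (simp add: power_mult)
  have e3: "x ^ (q ^ 2) = (x ^ q) ^ q" for x :: 'a by (simp add: power_mult[symmetric] power2_eq_square)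
  define Tr where "Tr w = (w ^ q) ^ q + w ^ q + w" for w :: 'a
  have Tr_q: "(Tr w) ^ q = Tr w" for w
    unfolding Tr_def frq fq3 by (simp add: add_ac)
  define g where "g x = c ^ (q ^ 2) * x ^ (q ^ 2 * R) + c ^ q * x ^ (q * R) + c * x ^ R" for x :: 'a
  define T where "T = tr3 q c"
  have T_Tr: "T = Tr c" unfolding T_def tr3_def Tr_def e3 ..
  have g_Tr: "g x = Tr (c * x ^ R)" for x
    unfolding g_def Tr_def e1 e2 e3 by (simp add: power_mult_distrib pw_swap[of _ R q])
  have g_q: "(g x) ^ q = g x" for x unfolding g_Tr by (rule Tr_q)
  have T_q: "T ^ q = T" unfolding T_Tr by (rule Tr_q)
  have f_eq: "f x = (x ^ q - x) ^ (Q + 1) + g x" for x unfolding f_def g_def by (simp add: add.assoc)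
  have g_add: "g (x + t) = g x + g t" for x t
    unfolding g_def e1 e2 frq frR by (simp add: algebra_simps)
  have g_fix: "g t = t ^ R * T" if "t ^ q = t" for t
    unfolding g_def e1 e2 T_def tr3_def e3 using that by (simp add: algebra_simps)
  have L_fix: "(x + t) ^ q - (x + t) = x ^ q - x" if "t ^ q = t" for x t :: 'a
    using that by (simp add: frq)
  have injR: "inj (\<lambda>x::'a. x ^ R)"
  proof (rule injI)
    fix x y :: 'a assume "x ^ R = y ^ R"
    then have "(x - y) ^ R = 0" by (simp add: frRm)
    then show "x = y" by simp
  qed
  have surjR: "surj (\<lambda>x::'a. x ^ R)" using finite_UNIV_inj_surj[OF _ injR] by simp
  have I: "T \<noteq> 0" if bf: "bij f"
  proof
    assume T0: "T = 0"
    have "f 1 = f 0"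
    proof -
      have "g 1 = 0" using g_fix[of 1] T0 by simp
      moreover have "g 0 = 0" using q2 ppos unfolding g_def by (simp add: R_def power_0_left)
      ultimately show ?thesis unfolding f_eq using q2 by simp
    qed
    then show False using bf unfolding bij_def inj_def by (metis one_neq_zero)
  qed
  have II: "gcd (q - 1) (Q + 1) = 1" if bf: "bij f"
  proof (rule ccontr)
    assume dn: "gcd (q - 1) (Q + 1) \<noteq> 1"
    define d where "d = gcd (q - 1) (Q + 1)"
    have "d \<noteq> 0" using q2 unfolding d_def by simp
    then have d1: "d > 1" using dn unfolding d_def by linarith
    have "[q = 1] (mod (q - 1))" using q2 by (simp add: cong_altdef_nat)
    then have "[q ^ 3 = 1 ^ 3] (mod (q - 1))" by (rule cong_pow)
    then have "(q - 1) dvd q ^ 3 - 1" using q2 by (subst (asm) cong_altdef_nat) auto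
    then have "d dvd card (UNIV :: 'a set) - 1" unfolding cardq d_def by (metis dvd_trans gcd_dvd1)
    then obtain z :: 'a where z: "z \<noteq> 1" "z ^ d = 1" using exists_root_unity[OF d1] by blast
    have zq1: "z ^ (q - 1) = 1"
    proof -
      obtain r where "q - 1 = d * r" unfolding d_def by (metis gcd_dvd1 dvdE)
      then show ?thesis using z by (simp add: power_mult)
    qed
    have qs: "q = Suc (q - 1)" using q2 by simp
    have zq: "z ^ q = z" using zq1 by (subst qs, subst power_Suc) simp
    have zQ: "z ^ (Q + 1) = 1"
    proof -
      obtain r where "Q + 1 = d * r" unfolding d_def by (metis gcd_dvd2 dvdE)
      then show ?thesis using z by (simp add: power_mult)
    qed
    have "\<exists>x0::'a. x0 ^ q \<noteq> x0"
    proof (rule ccontr)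
      assume "\<not> (\<exists>x0::'a. x0 ^ q \<noteq> x0)"
      then have "{x::'a. x ^ q = 1 * x ^ 1} = UNIV" by auto
      moreover have "card {x::'a. x ^ q = 1 * x ^ 1} \<le> q" by (rule card_pow_eq_le) (use q2 in simp)
      ultimately have "q ^ 3 \<le> q" using cardq by simp
      moreover have "q ^ 3 > q"
      proof -
        have "2 * 2 \<le> q * q" using mult_le_mono[OF q2 q2] .
        then have "q * 1 < q * (q * q)" using q2 by (intro mult_strict_left_mono) auto
        then show ?thesis by (simp add: power3_eq_cube)
      qed
      ultimately show False by simp
    qed
    then obtain x0 :: 'a where x0: "x0 ^ q \<noteq> x0" by blast
    define y0 where "y0 = x0 ^ q - x0"
    have y0: "y0 \<noteq> 0" using x0 unfolding y0_def by simp
    have T0: "T \<noteq> 0" using I[OF bf] .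
    define s where "s = (g x0 - g (z * x0)) / T"
    have sq: "s ^ q = s" unfolding s_def by (simp add: power_divide frqm g_q T_q)
    have "s \<in> range (\<lambda>x::'a. x ^ R)" using surjR by simp
    then obtain t where t0: "s = t ^ R" by blast
    then have t: "t ^ R = s" by simp
    have tq: "t ^ q = t"
    proof -
      have "(t ^ q) ^ R = (t ^ R) ^ q" by (rule pw_swap)
      also have "\<dots> = t ^ R" using t sq by simp
      finally show ?thesis using injR unfolding inj_def by blast
    qed
    define x1 where "x1 = z * x0 + t"
    have L1: "x1 ^ q - x1 = z * y0"
      unfolding x1_def y0_def using L_fix[OF tq, of "z * x0"] zq by (simp add: power_mult_distrib algebra_simps)
    have "f x1 = (z * y0) ^ (Q + 1) + g (z * x0) + t ^ R * T"
      unfolding f_eq L1 unfolding x1_def g_add g_fix[OF tq] by (simp add: add.assoc)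
    also have "\<dots> = y0 ^ (Q + 1) + g x0"
      using zQ T0 unfolding t s_def by (simp add: power_mult_distrib)
    also have "\<dots> = f x0" unfolding f_eq y0_def ..
    finally have fe: "f x1 = f x0" .
    have "x1 \<noteq> x0"
    proof
      assume "x1 = x0"
      then have "z * y0 = y0" using L1 unfolding y0_def by simp
      then have "(z - 1) * y0 = 0" by (simp add: algebra_simps)
      then show False using z y0 by simp
    qed
    then show False using fe bf unfolding bij_def inj_def by blast
  qed
  have III: "bij f" if p2: "p = 2" and D: "\<forall>j. 2 ^ j dvd k \<longrightarrow> 2 ^ j dvd l" and T0: "T \<noteq> 0"
  proof -
    have two: "(2::'a) = 0" using of_nat_CHAR[where 'a='a] CH p2 by simp
    have qk: "q = 2 ^ k" unfolding q_def p2 ..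
    have Ql: "Q = 2 ^ l" unfolding Q_def p2 ..
    have "inj f"
    proof (rule injI)
      fix x1 x2 :: 'a assume fe: "f x1 = f x2"
      define y1 where "y1 = x1 ^ q - x1"
      define y2 where "y2 = x2 ^ q - x2"
      have Hy: "(y ^ q) ^ q = y ^ q + y" if "y = x ^ q - x" for x y :: 'a
      proof -
        have "(y ^ q) ^ q = x - (x ^ q) ^ q" using that fq3 by (simp add: frqm)
        also have "\<dots> = x + (x ^ q) ^ q" by (simp add: c2_rules(4)[OF two])
        also have "\<dots> = ((x ^ q) ^ q + x ^ q) + (x ^ q + x)"
          by (simp only: add.assoc c2_rules(2)[OF two] add.commute)
        also have "\<dots> = y ^ q + y" using that by (simp add: frqm frq c2_rules(4)[OF two] add_ac)
        finally show ?thesis .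
      qed
      have S0: "y1 ^ (Q + 1) + y2 ^ (Q + 1) = g x1 + g x2"
        using fe unfolding f_eq y1_def[symmetric] y2_def[symmetric] by (rule char2_swap[OF two])
      have S: "(y1 ^ (Q + 1) + y2 ^ (Q + 1)) ^ q = y1 ^ (Q + 1) + y2 ^ (Q + 1)"
        unfolding S0 frq g_q ..
      have "y1 = y2"
        by (rule core[OF two kpos D]) (use Hy[OF y1_def] Hy[OF y2_def] S in \<open>simp_all only: qk Ql\<close>)
      define t where "t = x2 - x1"
      have tq: "t ^ q = t" using \<open>y1 = y2\<close> unfolding t_def y1_def y2_def frqm
        by (simp add: algebra_simps)
      have "f x2 = f (x1 + t)" unfolding t_def by simp
      also have "\<dots> = f x1 + t ^ R * T" unfolding f_eq L_fix[OF tq] g_add g_fix[OF tq] by (simp add: add.assoc)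
      finally have "t ^ R * T = 0" using fe by simp
      then have "t = 0" using T0 by simp
      then show "x1 = x2" unfolding t_def by simp
    qed
    then show "bij f" using finite_UNIV_inj_surj[of f] by (simp add: bij_def)
  qed
  have A: "bij f \<longleftrightarrow> gcd (q - 1) (Q + 1) = 1 \<and> T \<noteq> 0"
  proof
    assume "bij f" then show "gcd (q - 1) (Q + 1) = 1 \<and> T \<noteq> 0" using I II by blast
  next
    assume h: "gcd (q - 1) (Q + 1) = 1 \<and> T \<noteq> 0"
    have g1: "gcd (p ^ k - 1) (p ^ l + 1) = 1" using h unfolding q_def Q_def by simp
    have "p = 2 \<and> (\<forall>j. 2 ^ j dvd k \<longrightarrow> 2 ^ j dvd l)" by (rule N1[OF pp kpos g1])
    then show "bij f" using III h by blast
  qed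
  have B: "bij f \<longleftrightarrow> p = 2 \<and> ord2 k \<le> ord2 l \<and> T \<noteq> 0"
  proof
    assume bf: "bij f"
    then have "gcd (q - 1) (Q + 1) = 1 \<and> T \<noteq> 0" using A by blast
    then have g1: "gcd (p ^ k - 1) (p ^ l + 1) = 1" and T0: "T \<noteq> 0" unfolding q_def Q_def by simp_all
    have "p = 2 \<and> (\<forall>j. 2 ^ j dvd k \<longrightarrow> 2 ^ j dvd l)" by (rule N1[OF pp kpos g1])
    then show "p = 2 \<and> ord2 k \<le> ord2 l \<and> T \<noteq> 0" using ord2_iff[OF kpos] T0 by blast
  next
    assume "p = 2 \<and> ord2 k \<le> ord2 l \<and> T \<noteq> 0"
    then show "bij f" using III ord2_iff[OF kpos] by blast
  qed
  show ?thesis using A B unfolding T_def by blast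
qed

end
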